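(* Let $K>0$ and $m>0$ be fixed, and consider $f(q)=q!\left(\frac{m}{K}\right)^q$ for positive integers $q$ (by Theorem 2 of the paper, $f(q)$ is the asymptotic value of $p_{\textnormal{compromised}}/p_s$ in the $q$-composite scheme with key ring size $K$ when $m$ nodes are captured, so with $K$ and $p_s$ fixed this is the quantity to minimize over $q$). Then $f$ attains its minimum over the positive integers at $$q^*=\max\left\{\left\lfloor\frac{K}{m}\right\rfloor,\,1\right\}.$$
   Context: $\lfloor x\rfloor$ denotes the largest integer not exceeding $x$. In the $q$-composite scheme each sensor gets $K$ distinct keys uniformly at random from a key pool, two sensors share a secure link iff their key rings share at least $q$ keys, $p_s$ is the probability of this event, and $p_{\textnormal{compromised}}$ is the probability that a link between two non-captured sensors has all its shared keys held by the $m$ captured sensors. *)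

theory Defs
  imports Complex_Main
begin

definition comp_ratio :: "nat \<Rightarrow> nat \<Rightarrow> nat \<Rightarrow> real" where
  "comp_ratio K m q = fact q * (real m / real K) ^ q"

end

theory Submission
  imports Defs
begin

lemma cr_Suc: "comp_ratio K m (Suc q) = comp_ratio K m q * (real (Suc q) * real m / real K)"
  unfolding comp_ratio_def by (simp add: algebra_simps)

lemma cr_nonneg: "comp_ratio K m q \<ge> 0"
  unfolding comp_ratio_def by simp

lemma cr_dec:
  assumes K: "K > 0" and "a \<le> b" and "b \<le> K div m"
  shows "comp_ratio K m b \<le> comp_ratio K m a"
  using assms(2,3)
proof (induction b)
  case 0 then show ?case by simp
next
  case (Suc b)
  show ?case
  proof (cases "a = Suc b")
    case True then show ?thesis by simp
  next
    case False
    with Suc.prems have ih: "comp_ratio K m b \<le> comp_ratio K m a" by (intro Suc.IH) auto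
    have "Suc b * m \<le> K div m * m" using Suc.prems(2) by (rule mult_right_mono) simp
    also have "\<dots> \<le> K" by simp
    finally have "real (Suc b * m) \<le> real K" by (simp only: of_nat_le_iff)
    hence "real (Suc b) * real m \<le> real K" by (simp only: of_nat_mult)
    hence le1: "real (Suc b) * real m / real K \<le> 1" using K by simp
    have "comp_ratio K m (Suc b) \<le> comp_ratio K m b"
      unfolding cr_Suc using mult_left_mono[OF le1 cr_nonneg[of K m b]] by simp
    with ih show ?thesis by linarith
  qed
qed

lemma cr_inc:
  assumes K: "K > 0" and m: "m > 0" and "a \<le> b" and "K div m \<le> a"
  shows "comp_ratio K m a \<le> comp_ratio K m b"
  using assms(3)
proof (induction b)
  case 0 then show ?case by simp
next
  case (Suc b)
  show ?case
  proof (cases "a = Suc b")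
    case True then show ?thesis by simp
  next
    case False
    with Suc.prems have ih: "comp_ratio K m a \<le> comp_ratio K m b" by (intro Suc.IH) auto
    have "K div m < Suc b" using Suc.prems False assms(4) by simp
    hence "K < Suc b * m" using m by (simp add: div_less_iff_less_mult)
    hence "real K \<le> real (Suc b * m)" by (simp only: of_nat_le_iff less_imp_le)
    hence "real K \<le> real (Suc b) * real m" by (simp only: of_nat_mult)
    hence ge1: "1 \<le> real (Suc b) * real m / real K" using K by simp
    have "comp_ratio K m b \<le> comp_ratio K m (Suc b)"
      unfolding cr_Suc using mult_left_mono[OF ge1 cr_nonneg[of K m b]] by simp
    with ih show ?thesis by linarith
  qed
qed

theorem corollary2:
  fixes K m :: nat
  assumes "K > 0" and "m > 0"
  defines "qstar \<equiv> max (nat \<lfloor>real K / real m\<rfloor>) 1"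
  shows "qstar \<ge> 1 \<and> (\<forall>q::nat. q \<ge> 1 \<longrightarrow> comp_ratio K m qstar \<le> comp_ratio K m q)"
proof -
  have fl: "nat \<lfloor>real K / real m\<rfloor> = K div m"
    by (metis floor_divide_of_nat_eq nat_int)
  have qs: "qstar = max (K div m) 1" using qstar_def fl by simp
  show ?thesis
  proof (intro conjI allI impI)
    show "qstar \<ge> 1" using qs by simp
  next
    fix q :: nat assume q: "q \<ge> 1"
    show "comp_ratio K m qstar \<le> comp_ratio K m q"
    proof (cases "q \<le> qstar")
      case True
      show ?thesis
      proof (cases "K div m = 0")
        case True then show ?thesis using q \<open>q \<le> qstar\<close> qs by simp
      next
        case False
        then have "qstar = K div m" using qs by simp
        then show ?thesis using cr_dec[OF assms(1) True] by simp
      qed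
    next
      case False
      then show ?thesis using cr_inc[OF assms(1,2), of qstar q] qs by simp
    qed
  qed
qed

end
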